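(* Let $Q\subset\mathrm{EX}(M)$ be a set of pairwise compatible extensions. Then $Q(M)$ is Hausdorff.
   Context: Conventions: $M$ is an $n$-dimensional smooth manifold (Hausdorff, second countable) with maximal $C^\infty$ atlas $\mathcal{A}(M)$; every chart $\alpha$ has open domain $\mathrm{dom}(\alpha)\subset M$ and open range $\mathrm{ran}(\alpha)\subset\mathbb{R}^n$. For $A\subset\mathbb{R}^n$, $\partial A$ is its boundary in $\mathbb{R}^n$; for $A\subset U\subset\mathbb{R}^n$, $\partial_U A$ is the boundary of $A$ relative to $U$. An admissible boundary point of $\alpha$ is a $p\in\partial\,\mathrm{ran}(\alpha)$ such that every sequence $(x_i)\subset\mathrm{dom}(\alpha)$ with $\alpha(x_i)\to p$ has no accumulation point in $M$; $B(\alpha)$ is the set of these. An extension is a pair $(\alpha,U)$, $U\subset\mathbb{R}^n$ open, $\mathrm{ran}(\alpha)\subset U$, $\emptyset\ne\partial_U\mathrm{ran}(\alpha)\subset B(\alpha)$; $\mathrm{EX}(M)$ is the set of extensions. A boundary set is $(\alpha,U,V)$ with $(\alpha,U)\in\mathrm{EX}(M)$, $V\subset B(\alpha)\cap U$ (a boundary point if $V=\{p\}$). $(\alpha,U,V)$ covers $(\beta,X,Y)$ if for every sequence $(y_i)\subset\mathrm{dom}(\beta)$ with $(\beta(y_i))$ having an accumulation point in $Y$ there is a subsequence $(v_i)\subset\mathrm{dom}(\alpha)$ of $(y_i)$ with $(\alpha(v_i))$ having an accumulation point in $V$; they are equivalent, $\equiv$, if each covers the other. Boundary points $(\alpha,U,\{p\})$,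 $(\beta,X,\{q\})$ are in contact if there is a sequence $(x_i)\subset\mathrm{dom}(\alpha)\cap\mathrm{dom}(\beta)$ with $\alpha(x_i)\to p$ and $\beta(x_i)\to q$. Extensions $(\alpha,U)$, $(\beta,X)$ are compatible if for all $p\in B(\alpha)\cap U$, $q\in B(\beta)\cap X$, being in contact implies $(\alpha,U,\{p\})\equiv(\beta,X,\{q\})$. Completion: for $Q\subset\mathrm{EX}(M)$ let $P=\{(\alpha,\mathrm{ran}(\alpha)):\alpha\in\mathcal{A}(M)\}$, $S_Q=P\cup Q$, $N_{(\alpha,U)}=\mathrm{ran}(\alpha)\cup\partial_U\mathrm{ran}(\alpha)$ with subspace topology of $\mathbb{R}^n$, $N_Q=\bigsqcup_{(\alpha,U)\in S_Q}N_{(\alpha,U)}$ with disjoint-union topology. Identify $x\in N_{(\alpha,U)}$ with $y\in N_{(\beta,X)}$ iff either $x\in\mathrm{ran}(\alpha)$, $y\in\mathrm{ran}(\beta)$, $\beta\circ\alpha^{-1}(x)=y$, or $x\in\partial_U\mathrm{ran}(\alpha)$, $y\in\partial_X\mathrm{ran}(\beta)$, $(\alpha,U,\{x\})\equiv(\beta,X,\{y\})$. $Q(M)$ is the quotient space with the quotient topology. *)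

theory Defs
  imports "HOL-Analysis.Analysis"
begin

fun Ck_on :: "nat \<Rightarrow> 'a::euclidean_space set \<Rightarrow> ('a \<Rightarrow> 'b::euclidean_space) \<Rightarrow> bool" where
  "Ck_on 0 S f = continuous_on S f"
| "Ck_on (Suc k) S f =
     (f differentiable_on S \<and> (\<forall>v. Ck_on k S (\<lambda>x. frechet_derivative f (at x) v)))"

definition smooth_on :: "'a::euclidean_space set \<Rightarrow> ('a \<Rightarrow> 'b::euclidean_space) \<Rightarrow> bool" where
  "smooth_on S f \<longleftrightarrow> (\<forall>k. Ck_on k S f)"

text \<open>A chart is a pair (domain, map); the dimension n is DIM('a).\<close>
type_synonym ('m, 'a) chart = "'m set \<times> ('m \<Rightarrow> 'a)"

definition cdom :: "('m, 'a) chart \<Rightarrow> 'm set" where "cdom c = fst c"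
definition cmap :: "('m, 'a) chart \<Rightarrow> 'm \<Rightarrow> 'a" where "cmap c = snd c"
definition cran :: "('m, 'a) chart \<Rightarrow> 'a set" where "cran c = cmap c ` cdom c"
definition cinv :: "('m, 'a) chart \<Rightarrow> 'a \<Rightarrow> 'm" where "cinv c = inv_into (cdom c) (cmap c)"

definition is_chart :: "'m topology \<Rightarrow> ('m, 'a::euclidean_space) chart \<Rightarrow> bool" where
  "is_chart X c \<longleftrightarrow> openin X (cdom c) \<and> open (cran c) \<and>
     homeomorphic_map (subtopology X (cdom c)) (top_of_set (cran c)) (cmap c)"

definition smoothly_compatible :: "('m, 'a::euclidean_space) chart \<Rightarrow> ('m, 'a) chart \<Rightarrow> bool" where
  "smoothly_compatible c d \<longleftrightarrow>
     smooth_on (cmap c ` (cdom c \<inter> cdom d)) (cmap d \<circ> cinv c) \<and>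
     smooth_on (cmap d ` (cdom c \<inter> cdom d)) (cmap c \<circ> cinv d)"

definition maximal_smooth_atlas :: "'m topology \<Rightarrow> ('m, 'a::euclidean_space) chart set \<Rightarrow> bool" where
  "maximal_smooth_atlas X A \<longleftrightarrow>
     (\<forall>c\<in>A. is_chart X c) \<and>
     (\<Union>c\<in>A. cdom c) = topspace X \<and>
     (\<forall>c\<in>A. \<forall>d\<in>A. smoothly_compatible c d) \<and>
     (\<forall>d. is_chart X d \<and> (\<forall>c\<in>A. smoothly_compatible c d) \<longrightarrow> d \<in> A)"

definition smooth_manifold :: "'m topology \<Rightarrow> ('m, 'a::euclidean_space) chart set \<Rightarrow> bool" where
  "smooth_manifold X A \<longleftrightarrow> Hausdorff_space X \<and> second_countable X \<and> maximal_smooth_atlas X A"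

definition seq_acc :: "'b topology \<Rightarrow> (nat \<Rightarrow> 'b) \<Rightarrow> 'b \<Rightarrow> bool" where
  "seq_acc T s y \<longleftrightarrow> y \<in> topspace T \<and>
     (\<forall>W. openin T W \<and> y \<in> W \<longrightarrow> infinite {i. s i \<in> W})"

definition rel_boundary :: "'a::euclidean_space set \<Rightarrow> 'a set \<Rightarrow> 'a set" where
  "rel_boundary U A = (top_of_set U) frontier_of A"

definition admissible_bdry :: "'m topology \<Rightarrow> ('m, 'a::euclidean_space) chart \<Rightarrow> 'a set" where
  "admissible_bdry X c = {p \<in> frontier (cran c).
     \<forall>x::nat \<Rightarrow> 'm. (\<forall>i. x i \<in> cdom c) \<and> (cmap c \<circ> x) \<longlonglongrightarrow> p \<longrightarrow>
        \<not> (\<exists>y. seq_acc X x y)}"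

definition extensions :: "'m topology \<Rightarrow> ('m, 'a::euclidean_space) chart set
    \<Rightarrow> (('m, 'a) chart \<times> 'a set) set" where
  "extensions X A = {(c, U). c \<in> A \<and> open U \<and> cran c \<subseteq> U \<and>
      rel_boundary U (cran c) \<noteq> {} \<and> rel_boundary U (cran c) \<subseteq> admissible_bdry X c}"

definition covers :: "('m, 'a::euclidean_space) chart \<Rightarrow> 'a set \<Rightarrow> ('m, 'a) chart \<Rightarrow> 'a set \<Rightarrow> bool" where
  "covers a V b Y \<longleftrightarrow>
     (\<forall>y::nat \<Rightarrow> 'm. (\<forall>i. y i \<in> cdom b) \<and> (\<exists>q\<in>Y. seq_acc euclidean (cmap b \<circ> y) q) \<longrightarrow>
        (\<exists>r. strict_mono r \<and> (\<forall>i. y (r i) \<in> cdom a) \<and>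
             (\<exists>p\<in>V. seq_acc euclidean (cmap a \<circ> (y \<circ> r)) p)))"

definition bequiv :: "('m, 'a::euclidean_space) chart \<Rightarrow> 'a set \<Rightarrow> ('m, 'a) chart \<Rightarrow> 'a set \<Rightarrow> bool" where
  "bequiv a V b Y \<longleftrightarrow> covers a V b Y \<and> covers b Y a V"

definition in_contact :: "('m, 'a::euclidean_space) chart \<Rightarrow> 'a \<Rightarrow> ('m, 'a) chart \<Rightarrow> 'a \<Rightarrow> bool" where
  "in_contact a p b q \<longleftrightarrow>
     (\<exists>x::nat \<Rightarrow> 'm. (\<forall>i. x i \<in> cdom a \<inter> cdom b) \<and>
        (cmap a \<circ> x) \<longlonglongrightarrow> p \<and> (cmap b \<circ> x) \<longlonglongrightarrow> q)"

definition compatible_ext :: "'m topology \<Rightarrow> ('m, 'a::euclidean_space) chart \<times> 'a set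
    \<Rightarrow> ('m, 'a) chart \<times> 'a set \<Rightarrow> bool" where
  "compatible_ext X e f \<longleftrightarrow>
     (\<forall>p \<in> admissible_bdry X (fst e) \<inter> snd e. \<forall>q \<in> admissible_bdry X (fst f) \<inter> snd f.
        in_contact (fst e) p (fst f) q \<longrightarrow> bequiv (fst e) {p} (fst f) {q})"

definition quotient_topology :: "'b topology \<Rightarrow> ('b \<Rightarrow> 'b \<Rightarrow> bool) \<Rightarrow> 'b set topology" where
  "quotient_topology T R = topology (\<lambda>W.
     W \<subseteq> (\<lambda>x. {y \<in> topspace T. R x y}) ` topspace T \<and>
     openin T {x \<in> topspace T. {y \<in> topspace T. R x y} \<in> W})"

definition S_Q :: "('m, 'a::euclidean_space) chart set \<Rightarrow> (('m, 'a) chart \<times> 'a set) set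
    \<Rightarrow> (('m, 'a) chart \<times> 'a set) set" where
  "S_Q A Q = {(c, cran c) | c. c \<in> A} \<union> Q"

definition N_ext :: "('m, 'a::euclidean_space) chart \<times> 'a set \<Rightarrow> 'a topology" where
  "N_ext e = top_of_set (cran (fst e) \<union> rel_boundary (snd e) (cran (fst e)))"

definition N_Q :: "('m, 'a::euclidean_space) chart set \<Rightarrow> (('m, 'a) chart \<times> 'a set) set
    \<Rightarrow> ((('m, 'a) chart \<times> 'a set) \<times> 'a) topology" where
  "N_Q A Q = sum_topology N_ext (S_Q A Q)"

definition ident :: "((('m, 'a::euclidean_space) chart \<times> 'a set) \<times> 'a)
    \<Rightarrow> ((('m, 'a) chart \<times> 'a set) \<times> 'a) \<Rightarrow> bool" where
  "ident u v \<longleftrightarrow>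
     (let a = fst (fst u); U = snd (fst u); x = snd u;
          b = fst (fst v); Y = snd (fst v); y = snd v in
      (x \<in> cran a \<and> y \<in> cran b \<and> cinv a x \<in> cdom b \<and> cmap b (cinv a x) = y) \<or>
      (x \<in> rel_boundary U (cran a) \<and> y \<in> rel_boundary Y (cran b) \<and> bequiv a {x} b {y}))"

definition completion :: "'m topology \<Rightarrow> ('m, 'a::euclidean_space) chart set
    \<Rightarrow> (('m, 'a) chart \<times> 'a set) set \<Rightarrow> ((('m, 'a) chart \<times> 'a set) \<times> 'a) set topology" where
  "completion X A Q = quotient_topology (N_Q A Q) ident"

end

theory Submission imports Defs begin

lemma chart_basic:
  assumes "is_chart X c"
  shows "openin X (cdom c)" "open (cran c)" "inj_on (cmap c) (cdom c)"
    "continuous_map (subtopology X (cdom c)) euclidean (cmap c)"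
    "continuous_map (top_of_set (cran c)) (subtopology X (cdom c)) (cinv c)"
    "\<And>y. y \<in> cran c \<Longrightarrow> cinv c y \<in> cdom c \<and> cmap c (cinv c y) = y"
    "\<And>x. x \<in> cdom c \<Longrightarrow> cinv c (cmap c x) = x \<and> cmap c x \<in> cran c"
    "\<And>V. openin X V \<Longrightarrow> V \<subseteq> cdom c \<Longrightarrow> open (cmap c ` V)"
proof -
  have o: "openin X (cdom c)" and oR: "open (cran c)"
    and h: "homeomorphic_map (subtopology X (cdom c)) (top_of_set (cran c)) (cmap c)"
    using assms by (auto simp: is_chart_def)
  have ts0: "topspace X \<inter> cdom c = cdom c"
    using o openin_subset by auto
  have ts: "topspace (subtopology X (cdom c)) = cdom c"
    using ts0 by simp
  have L: "continuous_map (subtopology X (cdom c)) (top_of_set (cran c)) (cmap c)"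
     "inj_on (cmap c) (cdom c)"
    using h by (auto simp: homeomorphic_eq_everything_map ts0)
  show "openin X (cdom c)" "open (cran c)" "inj_on (cmap c) (cdom c)" using o oR L by auto
  show "continuous_map (subtopology X (cdom c)) euclidean (cmap c)"
    using L(1) continuous_map_into_fulltopology by blast
  show Y: "\<And>y. y \<in> cran c \<Longrightarrow> cinv c y \<in> cdom c \<and> cmap c (cinv c y) = y"
    by (auto simp: cinv_def cran_def inv_into_into f_inv_into_f)
  show XX: "\<And>x. x \<in> cdom c \<Longrightarrow> cinv c (cmap c x) = x \<and> cmap c x \<in> cran c"
    using L(2) by (auto simp: cinv_def cran_def)
  show "continuous_map (top_of_set (cran c)) (subtopology X (cdom c)) (cinv c)"
  proof -
    obtain g where g: "homeomorphic_maps (subtopology X (cdom c)) (top_of_set (cran c)) (cmap c) g"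
      using h homeomorphic_map_maps by blast
    have eq: "\<And>y. y \<in> cran c \<Longrightarrow> g y = cinv c y"
    proof -
      fix y assume y: "y \<in> cran c"
      then have "g y \<in> cdom c" "cmap c (g y) = y" using g ts
        by (auto simp: homeomorphic_maps_def continuous_map_def)
      then show "g y = cinv c y" using Y[OF y] L(2) by (metis inj_on_def)
    qed
    have "continuous_map (top_of_set (cran c)) (subtopology X (cdom c)) g"
      using g by (auto simp: homeomorphic_maps_def)
    then show ?thesis using eq by (metis continuous_map_eq topspace_euclidean_subtopology)
  qed
  show "\<And>V. openin X V \<Longrightarrow> V \<subseteq> cdom c \<Longrightarrow> open (cmap c ` V)"
  proof -
    fix V assume V: "openin X V" "V \<subseteq> cdom c"
    then have "openin (subtopology X (cdom c)) V"
      by (metis inf.absorb_iff2 openin_subtopology_Int2)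
    then have "openin (top_of_set (cran c)) (cmap c ` V)"
      using homeomorphic_map_openness[OF h] V ts by auto
    then show "open (cmap c ` V)" using oR openin_open_trans by blast
  qed
qed
lemma chart_limit:
  assumes c: "is_chart X c" and x: "\<And>i. x i \<in> cdom c" and lim: "(cmap c \<circ> x) \<longlonglongrightarrow> w"
    and w: "w \<in> cran c"
  shows "limitin X x (cinv c w) sequentially"
proof -
  have "limitin (top_of_set (cran c)) (cmap c \<circ> x) w sequentially"
    using lim w x chart_basic(7)[OF c] by (auto simp: limitin_subtopology limitin_canonical_iff)
  then have "limitin (subtopology X (cdom c)) (cinv c \<circ> (cmap c \<circ> x)) (cinv c w) sequentially"
    by (rule continuous_map_limit[OF chart_basic(5)[OF c]])
  moreover have "cinv c \<circ> (cmap c \<circ> x) = x" using chart_basic(7)[OF c] x by auto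
  ultimately have "limitin (subtopology X (cdom c)) x (cinv c w) sequentially" by simp
  then show ?thesis unfolding limitin_subtopology by blast
qed

lemma limitin_acc:
  assumes "limitin T x l sequentially" shows "seq_acc T x l"
  unfolding seq_acc_def
proof (intro conjI allI impI)
  show "l \<in> topspace T" using assms limitin_topspace by metis
  fix W assume "openin T W \<and> l \<in> W"
  then have "eventually (\<lambda>i. x i \<in> W) sequentially" using assms by (auto simp: limitin_def)
  then obtain N where "\<forall>n\<ge>N. x n \<in> W" by (auto simp: eventually_sequentially)
  then have "{N..} \<subseteq> {i. x i \<in> W}" by auto
  then show "infinite {i. x i \<in> W}" using infinite_Ici finite_subset by blast
qed

lemma tendsto_acc:
  assumes "x \<longlonglongrightarrow> l" shows "seq_acc euclidean x l"
  by (rule limitin_acc) (simp add: limitin_canonical_iff assms)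

lemma acc_in_open:
  assumes "seq_acc euclidean x l" "open W" "l \<in> W"
  shows "infinite {i. x i \<in> W}"
  using assms by (auto simp: seq_acc_def)

lemma acc_ev_exists:
  assumes "seq_acc euclidean x l" "open W" "l \<in> W" "eventually P sequentially"
  shows "\<exists>i. x i \<in> W \<and> P i"
proof -
  obtain N where N: "\<forall>n\<ge>N. P n" using assms(4) by (auto simp: eventually_sequentially)
  have "infinite {i. x i \<in> W}" using acc_in_open assms by blast
  then obtain i where "i \<in> {i. x i \<in> W}" "i \<ge> N"
    using infinite_nat_iff_unbounded_le by blast
  then show ?thesis using N by auto
qed

lemma quotient_open:
  "openin (quotient_topology T R) W \<longleftrightarrow>
     W \<subseteq> (\<lambda>x. {y \<in> topspace T. R x y}) ` topspace T \<and>
     openin T {x \<in> topspace T. {y \<in> topspace T. R x y} \<in> W}"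
proof -
  define cl where "cl x = {y \<in> topspace T. R x y}" for x
  define P where "P W \<longleftrightarrow> W \<subseteq> cl ` topspace T \<and> openin T {x \<in> topspace T. cl x \<in> W}" for W
  have i1: "P (S \<inter> S')" if a: "P S" "P S'" for S S'
  proof -
    have "{x \<in> topspace T. cl x \<in> S \<inter> S'} = {x \<in> topspace T. cl x \<in> S} \<inter> {x \<in> topspace T. cl x \<in> S'}"
      by auto
    then show ?thesis using a by (auto simp: P_def)
  qed
  have i2: "P (\<Union>K)" if a: "\<forall>k\<in>K. P k" for K
  proof -
    have "{x \<in> topspace T. cl x \<in> \<Union>K} = (\<Union>k\<in>K. {x \<in> topspace T. cl x \<in> k})" by auto
    then show ?thesis using a by (auto simp: P_def)
  qed
  have ist: "istopology P" unfolding istopology_def using i1 i2 by blast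
  have PP: "P = (\<lambda>W. W \<subseteq> cl ` topspace T \<and> openin T {x \<in> topspace T. cl x \<in> W})"
    by (rule ext) (simp add: P_def)
  have "openin (topology (\<lambda>W. W \<subseteq> cl ` topspace T \<and> openin T {x \<in> topspace T. cl x \<in> W})) W \<longleftrightarrow>
     W \<subseteq> cl ` topspace T \<and> openin T {x \<in> topspace T. cl x \<in> W}"
    using topology_inverse'[OF ist] by (simp add: PP)
  then show ?thesis unfolding quotient_topology_def cl_def .
qed

lemma quotient_Hausdorff:
  assumes refl: "\<And>u. u \<in> topspace T \<Longrightarrow> R u u"
  and sym: "\<And>u v. u \<in> topspace T \<Longrightarrow> v \<in> topspace T \<Longrightarrow> R u v \<Longrightarrow> R v u"
  and trans: "\<And>u v w. u \<in> topspace T \<Longrightarrow> v \<in> topspace T \<Longrightarrow> w \<in> topspace T \<Longrightarrow> R u v \<Longrightarrow> R v w \<Longrightarrow> R u w"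
  and sep: "\<And>u v. u \<in> topspace T \<Longrightarrow> v \<in> topspace T \<Longrightarrow> \<not> R u v \<Longrightarrow>
     \<exists>G H. openin T G \<and> openin T H \<and> u \<in> G \<and> v \<in> H \<and>
       (\<forall>a\<in>G. \<forall>b\<in>topspace T. R a b \<longrightarrow> b \<in> G) \<and> (\<forall>a\<in>H. \<forall>b\<in>topspace T. R a b \<longrightarrow> b \<in> H) \<and> G \<inter> H = {}"
  shows "Hausdorff_space (quotient_topology T R)"
proof -
  define cl where "cl x = {y \<in> topspace T. R x y}" for x
  have op: "openin (quotient_topology T R) W \<longleftrightarrow> W \<subseteq> cl ` topspace T \<and> openin T {x \<in> topspace T. cl x \<in> W}" for W
    unfolding quotient_open cl_def by simp
  have ts: "topspace (quotient_topology T R) \<subseteq> cl ` topspace T"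
  proof -
    have "openin (quotient_topology T R) (topspace (quotient_topology T R))" by (rule openin_topspace)
    then show ?thesis unfolding op by (rule conjunct1)
  qed
  have clsame: "cl u = cl v" if "u \<in> topspace T" "v \<in> topspace T" "R u v" for u v
    unfolding cl_def using that sym trans by blast
  have pre: "{x \<in> topspace T. cl x \<in> cl ` G} = G"
    if G: "openin T G" "\<forall>a\<in>G. \<forall>b\<in>topspace T. R a b \<longrightarrow> b \<in> G" for G
  proof
    show "G \<subseteq> {x \<in> topspace T. cl x \<in> cl ` G}" using openin_subset[OF G(1)] by auto
    show "{x \<in> topspace T. cl x \<in> cl ` G} \<subseteq> G"
    proof
      fix x assume "x \<in> {x \<in> topspace T. cl x \<in> cl ` G}"
      then obtain g where g: "g \<in> G" "cl x = cl g" "x \<in> topspace T" by auto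
      then have "x \<in> cl g" using refl[of x] by (auto simp: cl_def)
      then show "x \<in> G" using G g by (auto simp: cl_def)
    qed
  qed
  show ?thesis unfolding Hausdorff_space_def
  proof (intro allI impI)
    fix C1 C2 assume a: "C1 \<in> topspace (quotient_topology T R) \<and> C2 \<in> topspace (quotient_topology T R) \<and> C1 \<noteq> C2"
    then obtain u v where uv: "u \<in> topspace T" "v \<in> topspace T" "C1 = cl u" "C2 = cl v"
      using ts by blast
    then have "\<not> R u v" using clsame[OF uv(1,2)] a by auto
    then obtain G H where GH: "openin T G" "openin T H" "u \<in> G" "v \<in> H"
      "\<forall>a\<in>G. \<forall>b\<in>topspace T. R a b \<longrightarrow> b \<in> G" "\<forall>a\<in>H. \<forall>b\<in>topspace T. R a b \<longrightarrow> b \<in> H" "G \<inter> H = {}"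
      using sep[OF uv(1,2) \<open>\<not> R u v\<close>] by blast
    have sub: "cl ` G \<subseteq> cl ` topspace T" "cl ` H \<subseteq> cl ` topspace T"
      using openin_subset GH by blast+
    have "openin (quotient_topology T R) (cl ` G)" unfolding op using pre[OF GH(1) GH(5)] sub GH(1) by simp
    moreover have "openin (quotient_topology T R) (cl ` H)" unfolding op using pre[OF GH(2) GH(6)] sub GH(2) by simp
    moreover have "disjnt (cl ` G) (cl ` H)"
    proof -
      { fix g h assume gh: "g \<in> G" "h \<in> H" "cl g = cl h"
        have hT: "h \<in> topspace T" using gh openin_subset GH by blast
        then have "h \<in> cl g" using gh refl by (auto simp: cl_def)
        then have "h \<in> G" using GH gh by (auto simp: cl_def)
        then have False using GH gh by blast }
      then show ?thesis by (auto simp: disjnt_def)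
    qed
    ultimately have "openin (quotient_topology T R) (cl ` G) \<and> openin (quotient_topology T R) (cl ` H) \<and> C1 \<in> cl ` G \<and> C2 \<in> cl ` H \<and> disjnt (cl ` G) (cl ` H)"
      using uv GH by auto
    then show "\<exists>U V. openin (quotient_topology T R) U \<and> openin (quotient_topology T R) V \<and> C1 \<in> U \<and> C2 \<in> V \<and> disjnt U V"
      by blast
  qed
qed

lemma covers_refl: "covers a V a V"
  unfolding covers_def
proof (intro allI impI)
  fix y assume "(\<forall>i. y i \<in> cdom a) \<and> (\<exists>q\<in>V. seq_acc euclidean (cmap a \<circ> y) q)"
  then show "\<exists>r. strict_mono r \<and> (\<forall>i. y (r i) \<in> cdom a) \<and> (\<exists>p\<in>V. seq_acc euclidean (cmap a \<circ> (y \<circ> r)) p)"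
    by (intro exI[of _ id]) (auto simp: strict_mono_def)
qed

lemma covers_trans:
  assumes ab: "covers a V b Y" and bc: "covers b Y c Z"
  shows "covers a V c Z"
  unfolding covers_def
proof (intro allI impI)
  fix y assume h: "(\<forall>i. y i \<in> cdom c) \<and> (\<exists>q\<in>Z. seq_acc euclidean (cmap c \<circ> y) q)"
  obtain r1 where r1: "strict_mono r1" "\<forall>i. y (r1 i) \<in> cdom b" "\<exists>p\<in>Y. seq_acc euclidean (cmap b \<circ> (y \<circ> r1)) p"
    using bc h unfolding covers_def by blast
  have "(\<forall>i. (y \<circ> r1) i \<in> cdom b) \<and> (\<exists>q\<in>Y. seq_acc euclidean (cmap b \<circ> (y \<circ> r1)) q)"
    using r1 by auto
  then obtain r2 where r2: "strict_mono r2" "\<forall>i. (y \<circ> r1) (r2 i) \<in> cdom a"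
      "\<exists>p\<in>V. seq_acc euclidean (cmap a \<circ> ((y \<circ> r1) \<circ> r2)) p"
    using ab unfolding covers_def by blast
  show "\<exists>r. strict_mono r \<and> (\<forall>i. y (r i) \<in> cdom a) \<and> (\<exists>p\<in>V. seq_acc euclidean (cmap a \<circ> (y \<circ> r)) p)"
    apply (rule exI[of _ "r1 \<circ> r2"])
    using r1 r2 strict_mono_o[OF r1(1) r2(1)] by (auto simp: o_assoc)
qed

lemma bequiv_refl: "bequiv a V a V" by (simp add: bequiv_def covers_refl)
lemma bequiv_sym: "bequiv a V b Y \<Longrightarrow> bequiv b Y a V" by (simp add: bequiv_def)
lemma bequiv_trans: "bequiv a V b Y \<Longrightarrow> bequiv b Y c Z \<Longrightarrow> bequiv a V c Z"
  unfolding bequiv_def using covers_trans by blast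

lemma rb_char:
  assumes "open U" "open R" "R \<subseteq> U"
  shows "rel_boundary U R = U \<inter> closure R - R"
proof -
  have c: "(top_of_set U) closure_of R = U \<inter> closure R"
    using assms(3) by (simp add: closure_of_subtopology Int_absorb1)
  have "openin (top_of_set U) R" using assms by (simp add: openin_open_eq)
  then have i: "(top_of_set U) interior_of R = R" by (rule interior_of_openin)
  show ?thesis unfolding rel_boundary_def frontier_of_def c i ..
qed

lemma ident_iff:
  "ident (e, x) (f, y) \<longleftrightarrow>
    (x \<in> cran (fst e) \<and> y \<in> cran (fst f) \<and> cinv (fst e) x \<in> cdom (fst f) \<and> cmap (fst f) (cinv (fst e) x) = y) \<or>
    (x \<in> rel_boundary (snd e) (cran (fst e)) \<and> y \<in> rel_boundary (snd f) (cran (fst f)) \<and> bequiv (fst e) {x} (fst f) {y})"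
  by (simp add: ident_def Let_def)

lemma ball_seq_lim:
  fixes f :: "nat \<Rightarrow> 'a::metric_space"
  assumes "\<And>k. dist (f k) z < 1 / (real k + 1)"
  shows "f \<longlonglongrightarrow> z"
  unfolding lim_sequentially
proof (intro allI impI)
  fix r :: real assume r: "r > 0"
  obtain N :: nat where N0: "inverse (real (Suc N)) < r"
    using reals_Archimedean r by blast
  then have N: "1 / (real N + 1) < r" by (simp add: inverse_eq_divide add.commute)
  show "\<exists>no. \<forall>n\<ge>no. dist (f n) z < r"
  proof (intro exI allI impI)
    fix n assume "n \<ge> N"
    then have "1 / (real n + 1) \<le> 1 / (real N + 1)" by (simp add: frac_le)
    then show "dist (f n) z < r" using N assms[of n] by linarith
  qed
qed

locale compl_setting =
  fixes X :: "'m topology" and A :: "('m, 'a::euclidean_space) chart set"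
    and Q :: "(('m, 'a) chart \<times> 'a set) set"
  assumes man: "smooth_manifold X A"
    and QE: "Q \<subseteq> extensions X A"
    and pw: "pairwise (compatible_ext X) Q"
begin

abbreviation D :: "('m, 'a) chart \<times> 'a set \<Rightarrow> 'a set" where
  "D e \<equiv> rel_boundary (snd e) (cran (fst e))"

abbreviation SS where "SS \<equiv> S_Q A Q"
abbreviation TT where "TT \<equiv> N_Q A Q"

lemma atlas_chart: "c \<in> A \<Longrightarrow> is_chart X c"
  using man by (auto simp: smooth_manifold_def maximal_smooth_atlas_def)

lemma Hs: "Hausdorff_space X"
  using man by (auto simp: smooth_manifold_def)

lemma S_props:
  assumes "e \<in> SS"
  shows "is_chart X (fst e)" "open (snd e)" "cran (fst e) \<subseteq> snd e"
    "D e = snd e \<inter> closure (cran (fst e)) - cran (fst e)"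
    "D e \<subseteq> admissible_bdry X (fst e)"
proof -
  have A: "fst e \<in> A \<and> open (snd e) \<and> cran (fst e) \<subseteq> snd e \<and>
      (e \<in> Q \<longrightarrow> D e \<subseteq> admissible_bdry X (fst e))"
  proof (cases "e \<in> Q")
    case True
    then have "e \<in> extensions X A" using QE by blast
    then show ?thesis by (cases e) (auto simp: extensions_def)
  next
    case False
    then obtain c where "e = (c, cran c)" "c \<in> A" using assms by (auto simp: S_Q_def)
    then show ?thesis using chart_basic(2)[OF atlas_chart] False by auto
  qed
  show "is_chart X (fst e)" "open (snd e)" "cran (fst e) \<subseteq> snd e"
    using A atlas_chart by auto
  show C: "D e = snd e \<inter> closure (cran (fst e)) - cran (fst e)"
    using A chart_basic(2)[OF atlas_chart] by (simp add: rb_char)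
  show "D e \<subseteq> admissible_bdry X (fst e)"
  proof (cases "e \<in> Q")
    case True then show ?thesis using A by auto
  next
    case False
    then obtain c where "e = (c, cran c)" using assms by (auto simp: S_Q_def)
    then have "D e = {}" using C by auto
    then show ?thesis by simp
  qed
qed

lemma S_Q_nonempty:
  assumes "e \<in> SS" "D e \<noteq> {}" shows "e \<in> Q"
proof (rule ccontr)
  assume "e \<notin> Q"
  then obtain c where "e = (c, cran c)" using assms by (auto simp: S_Q_def)
  then have "D e = {}" using S_props(4)[OF assms(1)] by auto
  then show False using assms by simp
qed

lemma D_disj: "e \<in> SS \<Longrightarrow> z \<in> D e \<Longrightarrow> z \<notin> cran (fst e)"
  using S_props(4) by blast

lemma D_sub: "e \<in> SS \<Longrightarrow> z \<in> D e \<Longrightarrow> z \<in> snd e \<and> z \<in> closure (cran (fst e))"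
  using S_props(4) by blast

lemma topT: "topspace TT = {(e, z). e \<in> SS \<and> z \<in> cran (fst e) \<union> D e}"
  by (auto simp: N_Q_def N_ext_def)

lemma compat:
  assumes e: "e \<in> SS" and f: "f \<in> SS" and p: "p \<in> D e" and q: "q \<in> D f"
    and con: "in_contact (fst e) p (fst f) q"
  shows "bequiv (fst e) {p} (fst f) {q}"
proof (cases "e = f")
  case True
  obtain x where "(cmap (fst e) \<circ> x) \<longlonglongrightarrow> p" "(cmap (fst f) \<circ> x) \<longlonglongrightarrow> q"
    using con by (auto simp: in_contact_def)
  then have "p = q" using True LIMSEQ_unique by metis
  then show ?thesis using True bequiv_refl by simp
next
  case False
  have eQ: "e \<in> Q" using S_Q_nonempty e p by blast
  have fQ: "f \<in> Q" using S_Q_nonempty f q by blast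
  have "compatible_ext X e f" using pw eQ fQ False by (auto simp: pairwise_def)
  moreover have "p \<in> admissible_bdry X (fst e) \<inter> snd e" using S_props(5)[OF e] D_sub[OF e] p by auto
  moreover have "q \<in> admissible_bdry X (fst f) \<inter> snd f" using S_props(5)[OF f] D_sub[OF f] q by auto
  ultimately show ?thesis using con unfolding compatible_ext_def by blast
qed

lemma ident_refl:
  assumes "u \<in> topspace TT" shows "ident u u"
proof -
  obtain e z where u: "u = (e, z)" "e \<in> SS" "z \<in> cran (fst e) \<union> D e" using assms topT by auto
  show ?thesis using u chart_basic(6)[OF S_props(1)[OF u(2)]] bequiv_refl[of "fst e" "{z}"]
    by (auto simp: ident_iff)
qed

lemma ident_sym:
  assumes "u \<in> topspace TT" "v \<in> topspace TT" "ident u v" shows "ident v u"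
proof -
  obtain e x where u: "u = (e, x)" "e \<in> SS" using assms topT by auto
  obtain f y where v: "v = (f, y)" "f \<in> SS" using assms topT by auto
  have ce: "is_chart X (fst e)" and cf: "is_chart X (fst f)" using S_props(1) u v by auto
  show ?thesis
  proof (cases "x \<in> cran (fst e) \<and> y \<in> cran (fst f) \<and> cinv (fst e) x \<in> cdom (fst f) \<and> cmap (fst f) (cinv (fst e) x) = y")
    case True
    define m where "m = cinv (fst e) x"
    have m: "m \<in> cdom (fst e)" "cmap (fst e) m = x" using chart_basic(6)[OF ce] True m_def by auto
    have "cinv (fst f) y = m" using chart_basic(7)[OF cf] True m_def by auto
    then show ?thesis using True m u v by (auto simp: ident_iff)
  next
    case False
    then have "x \<in> D e" "y \<in> D f" "bequiv (fst e) {x} (fst f) {y}"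
      using assms u v by (auto simp: ident_iff)
    then have "bequiv (fst f) {y} (fst e) {x}" using bequiv_sym by blast
    then show ?thesis unfolding u v ident_iff using \<open>x \<in> D e\<close> \<open>y \<in> D f\<close> by blast
  qed
qed

lemma ident_trans:
  assumes "u \<in> topspace TT" "v \<in> topspace TT" "w \<in> topspace TT" "ident u v" "ident v w"
  shows "ident u w"
proof -
  obtain e x where u: "u = (e, x)" "e \<in> SS" using assms topT by auto
  obtain f y where v: "v = (f, y)" "f \<in> SS" using assms topT by auto
  obtain g z where w: "w = (g, z)" "g \<in> SS" using assms topT by auto
  have cf: "is_chart X (fst f)" using S_props(1) v by auto
  have dy: "y \<in> D f \<Longrightarrow> y \<notin> cran (fst f)" using D_disj v by blast
  show ?thesis
  proof (cases "x \<in> cran (fst e) \<and> y \<in> cran (fst f) \<and> cinv (fst e) x \<in> cdom (fst f) \<and> cmap (fst f) (cinv (fst e) x) = y")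
    case True
    then have "cinv (fst f) y = cinv (fst e) x" using chart_basic(7)[OF cf] by auto
    then show ?thesis using True assms u v w dy by (auto simp: ident_iff)
  next
    case False
    then have "y \<in> D f" "bequiv (fst e) {x} (fst f) {y}" "x \<in> D e"
      using assms u v by (auto simp: ident_iff)
    moreover have "z \<in> D g \<and> bequiv (fst f) {y} (fst g) {z}"
      using assms v w dy \<open>y \<in> D f\<close> by (auto simp: ident_iff)
    ultimately have "x \<in> D e" "z \<in> D g" "bequiv (fst e) {x} (fst g) {z}"
      using bequiv_trans by blast+
    then show ?thesis unfolding u w ident_iff by blast
  qed
qed


definition Sat where
  "Sat e B = {w \<in> topspace TT. \<exists>z\<in>B. z \<in> cran (fst e) \<union> D e \<and> ident (e, z) w}"

lemma seq_to_D:
  assumes e: "e \<in> SS" and p: "p \<in> D e"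
  obtains x where "\<And>i. x i \<in> cdom (fst e)" "(cmap (fst e) \<circ> x) \<longlonglongrightarrow> p"
proof -
  have "p \<in> closure (cran (fst e))" using D_sub[OF e p] by blast
  then obtain s where s: "\<forall>n. s n \<in> cran (fst e)" "s \<longlonglongrightarrow> p" by (auto simp: closure_sequential)
  define x where "x n = cinv (fst e) (s n)" for n
  have ce: "is_chart X (fst e)" using S_props(1)[OF e] .
  have "\<And>i. x i \<in> cdom (fst e)" "cmap (fst e) \<circ> x = s"
    using chart_basic(6)[OF ce] s(1) by (auto simp: x_def)
  then show ?thesis using that s(2) by auto
qed

lemma sat_meet:
  assumes e: "e \<in> SS" and f: "f \<in> SS" and B: "open B" and C: "open C"
    and w1: "w \<in> Sat e B" and w2: "w \<in> Sat f C"
  shows "\<exists>m. m \<in> cdom (fst e) \<and> m \<in> cdom (fst f) \<and> cmap (fst e) m \<in> B \<and> cmap (fst f) m \<in> C"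
proof -
  obtain p where p: "p \<in> B" "p \<in> cran (fst e) \<union> D e" "ident (e, p) w" "w \<in> topspace TT"
    using w1 by (auto simp: Sat_def)
  obtain q where q: "q \<in> C" "q \<in> cran (fst f) \<union> D f" "ident (f, q) w"
    using w2 by (auto simp: Sat_def)
  have pT: "(e, p) \<in> topspace TT" and qT: "(f, q) \<in> topspace TT" using topT e f p q by auto
  have "ident w (f, q)" using ident_sym qT p(4) q(3) by blast
  then have pq: "ident (e, p) (f, q)" using ident_trans pT qT p by blast
  have ce: "is_chart X (fst e)" using S_props(1)[OF e] .
  show ?thesis
  proof (cases "p \<in> cran (fst e) \<and> q \<in> cran (fst f) \<and> cinv (fst e) p \<in> cdom (fst f) \<and> cmap (fst f) (cinv (fst e) p) = q")
    case True
    then show ?thesis using chart_basic(6)[OF ce] p q by metis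
  next
    case False
    then have pD: "p \<in> D e" and bq: "bequiv (fst e) {p} (fst f) {q}" using pq by (auto simp: ident_iff)
    obtain x where x: "\<And>i. x i \<in> cdom (fst e)" "(cmap (fst e) \<circ> x) \<longlonglongrightarrow> p"
      using seq_to_D[OF e pD] by blast
    have "covers (fst f) {q} (fst e) {p}" using bq by (simp add: bequiv_def)
    moreover have "(\<forall>i. x i \<in> cdom (fst e)) \<and> (\<exists>q\<in>{p}. seq_acc euclidean (cmap (fst e) \<circ> x) q)"
      using x tendsto_acc by auto
    ultimately obtain r where r: "strict_mono r" "\<forall>i. x (r i) \<in> cdom (fst f)"
        "seq_acc euclidean (cmap (fst f) \<circ> (x \<circ> r)) q"
      unfolding covers_def by blast
    have "(cmap (fst e) \<circ> x \<circ> r) \<longlonglongrightarrow> p" using LIMSEQ_subseq_LIMSEQ[OF x(2) r(1)] .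
    then have ev: "eventually (\<lambda>i. (cmap (fst e) \<circ> x \<circ> r) i \<in> B) sequentially"
      using B p(1) topological_tendstoD by blast
    obtain i where "(cmap (fst f) \<circ> (x \<circ> r)) i \<in> C" "(cmap (fst e) \<circ> x \<circ> r) i \<in> B"
      using acc_ev_exists[OF r(3) C q(1) ev] by blast
    then show ?thesis using x(1) r(2) by (intro exI[of _ "x (r i)"]) auto
  qed
qed


lemma adm_no_acc:
  assumes e: "e \<in> SS" and x: "x \<in> D e" and m: "\<And>i. m i \<in> cdom (fst e)"
    and lim: "(cmap (fst e) \<circ> m) \<longlonglongrightarrow> x" and acc: "seq_acc X m y"
  shows False
proof -
  have "x \<in> admissible_bdry X (fst e)" using S_props(5)[OF e] x by blast
  then show False using m lim acc unfolding admissible_bdry_def by blast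
qed

lemma contact_ident:
  assumes u: "(e, x) \<in> topspace TT" and v: "(f, y) \<in> topspace TT"
    and m: "\<And>i. m i \<in> cdom (fst e) \<and> m i \<in> cdom (fst f)"
    and lx: "(cmap (fst e) \<circ> m) \<longlonglongrightarrow> x" and ly: "(cmap (fst f) \<circ> m) \<longlonglongrightarrow> y"
  shows "ident (e, x) (f, y)"
proof -
  have e: "e \<in> SS" and xs: "x \<in> cran (fst e) \<union> D e" using u topT by auto
  have f: "f \<in> SS" and ys: "y \<in> cran (fst f) \<union> D f" using v topT by auto
  have ce: "is_chart X (fst e)" using S_props(1)[OF e] .
  have cf: "is_chart X (fst f)" using S_props(1)[OF f] .
  have me: "\<And>i. m i \<in> cdom (fst e)" and mf: "\<And>i. m i \<in> cdom (fst f)" using m by auto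
  show ?thesis
  proof (cases "x \<in> cran (fst e)")
    case xr: True
    have l1: "limitin X m (cinv (fst e) x) sequentially" using chart_limit[OF ce me lx xr] .
    show ?thesis
    proof (cases "y \<in> cran (fst f)")
      case yr: True
      have l2: "limitin X m (cinv (fst f) y) sequentially" using chart_limit[OF cf mf ly yr] .
      have eq: "cinv (fst e) x = cinv (fst f) y"
        using limitin_Hausdorff_unique[OF l1 l2 trivial_limit_sequentially Hs] .
      then show ?thesis using xr yr chart_basic(6)[OF cf yr] by (simp add: ident_iff)
    next
      case False
      then have "y \<in> D f" using ys by blast
      then show ?thesis using adm_no_acc[OF f _ mf ly limitin_acc[OF l1]] by blast
    qed
  next
    case False
    then have xD: "x \<in> D e" using xs by blast
    show ?thesis
    proof (cases "y \<in> cran (fst f)")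
      case yr: True
      have l2: "limitin X m (cinv (fst f) y) sequentially" using chart_limit[OF cf mf ly yr] .
      then show ?thesis using adm_no_acc[OF e xD me lx limitin_acc[OF l2]] by blast
    next
      case False
      then have yD: "y \<in> D f" using ys by blast
      have "in_contact (fst e) x (fst f) y" unfolding in_contact_def
        using m lx ly by blast
      then have "bequiv (fst e) {x} (fst f) {y}" using compat[OF e f xD yD] by blast
      then show ?thesis using xD yD by (simp add: ident_iff)
    qed
  qed
qed

lemma sep_balls:
  assumes u: "(e, x) \<in> topspace TT" and v: "(f, y) \<in> topspace TT"
    and ni: "\<not> ident (e, x) (f, y)"
  shows "\<exists>k::nat. Sat e (ball x (1 / (real k + 1))) \<inter> Sat f (ball y (1 / (real k + 1))) = {}"
proof (rule ccontr)
  assume "\<not> ?thesis"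
  then have "\<forall>k::nat. \<exists>w. w \<in> Sat e (ball x (1 / (real k + 1))) \<and> w \<in> Sat f (ball y (1 / (real k + 1)))"
    by blast
  have e: "e \<in> SS" and f: "f \<in> SS" using u v topT by auto
  have "\<forall>k::nat. \<exists>m. m \<in> cdom (fst e) \<and> m \<in> cdom (fst f) \<and> cmap (fst e) m \<in> ball x (1 / (real k + 1))
       \<and> cmap (fst f) m \<in> ball y (1 / (real k + 1))"
    using sat_meet[OF e f open_ball open_ball] \<open>\<forall>k. \<exists>w. _\<close> by meson
  then obtain m where m: "\<And>k. m k \<in> cdom (fst e) \<and> m k \<in> cdom (fst f) \<and> cmap (fst e) (m k) \<in> ball x (1 / (real k + 1))
       \<and> cmap (fst f) (m k) \<in> ball y (1 / (real k + 1))"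
    by metis
  have lim: "(g \<circ> m) \<longlonglongrightarrow> z" if "\<And>k. g (m k) \<in> ball z (1 / (real k + 1))" for g and z :: 'a
  proof (rule LIMSEQ_I)
    fix r :: real assume r: "r > 0"
    obtain N :: nat where N0: "inverse (real (Suc N)) < r"
      using reals_Archimedean r by blast
    then have N: "1 / (real N + 1) < r" by (simp add: inverse_eq_divide add.commute)
    show "\<exists>no. \<forall>n\<ge>no. norm ((g \<circ> m) n - z) < r"
    proof (intro exI allI impI)
      fix n assume "n \<ge> N"
      then have "1 / (real n + 1) \<le> 1 / (real N + 1)" by (simp add: frac_le)
      moreover have "dist z (g (m n)) < 1 / (real n + 1)" using that[of n] by simp
      ultimately show "norm ((g \<circ> m) n - z) < r" using N by (simp add: dist_norm norm_minus_commute)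
    qed
  qed
  have "ident (e, x) (f, y)"
    using contact_ident[OF u v _ lim lim] m by blast
  then show False using ni by blast
qed


lemma sat_closed:
  assumes e: "e \<in> SS" and a: "a \<in> Sat e B" and b: "b \<in> topspace TT" and ab: "ident a b"
  shows "b \<in> Sat e B"
proof -
  obtain z where z: "z \<in> B" "z \<in> cran (fst e) \<union> D e" "ident (e, z) a" "a \<in> topspace TT"
    using a by (auto simp: Sat_def)
  have "(e, z) \<in> topspace TT" using topT e z by auto
  then have "ident (e, z) b" using ident_trans z b ab by blast
  then show ?thesis using z b by (auto simp: Sat_def)
qed

lemma sat_mem:
  assumes u: "(e, x) \<in> topspace TT" and x: "x \<in> B" shows "(e, x) \<in> Sat e B"
  using u x ident_refl[OF u] topT by (auto simp: Sat_def)

lemma int_step: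
  assumes e: "e \<in> SS" and g: "g \<in> SS" and m: "m \<in> cdom (fst e)" "m \<in> cdom (fst g)"
    and B: "cmap (fst e) m \<in> B"
  shows "(g, cmap (fst g) m) \<in> Sat e B"
proof -
  have ce: "is_chart X (fst e)" using S_props(1)[OF e] .
  have cg: "is_chart X (fst g)" using S_props(1)[OF g] .
  have p: "cinv (fst e) (cmap (fst e) m) = m" "cmap (fst e) m \<in> cran (fst e)"
    using chart_basic(7)[OF ce m(1)] by auto
  have "cmap (fst g) m \<in> cran (fst g)" using chart_basic(7)[OF cg m(2)] by auto
  then have "(g, cmap (fst g) m) \<in> topspace TT" using topT g by auto
  moreover have "ident (e, cmap (fst e) m) (g, cmap (fst g) m)"
    using p m \<open>cmap (fst g) m \<in> cran (fst g)\<close> by (simp add: ident_iff)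
  ultimately show ?thesis using B p(2) by (auto simp: Sat_def)
qed

lemma sat_local_int:
  assumes e: "e \<in> SS" and g: "g \<in> SS" and B: "open B"
    and p: "p \<in> B" "p \<in> cran (fst e)" and m: "cinv (fst e) p \<in> cdom (fst g)"
  shows "\<exists>d>0. \<forall>z'. dist z' (cmap (fst g) (cinv (fst e) p)) < d \<longrightarrow> (g, z') \<in> Sat e B"
proof -
  have ce: "is_chart X (fst e)" using S_props(1)[OF e] .
  have cg: "is_chart X (fst g)" using S_props(1)[OF g] .
  define V where "V = {x \<in> topspace (subtopology X (cdom (fst e))). cmap (fst e) x \<in> B}"
  have "openin (subtopology X (cdom (fst e))) V"
    unfolding V_def using openin_continuous_map_preimage[OF chart_basic(4)[OF ce]] B by simp
  then have oV: "openin X V" using openin_trans_full chart_basic(1)[OF ce] by blast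
  have Vsub: "V \<subseteq> cdom (fst e)" unfolding V_def by auto
  define V' where "V' = V \<inter> cdom (fst g)"
  have oV': "openin X V'" unfolding V'_def using oV chart_basic(1)[OF cg] by blast
  have W: "open (cmap (fst g) ` V')" using chart_basic(8)[OF cg oV'] V'_def by blast
  have m0: "cinv (fst e) p \<in> V'" using chart_basic(6)[OF ce p(2)] chart_basic(1)[OF ce] openin_subset p(1) m
    by (auto simp: V_def V'_def)
  then obtain d where d: "d > 0" "ball (cmap (fst g) (cinv (fst e) p)) d \<subseteq> cmap (fst g) ` V'"
    using W open_contains_ball by blast
  show ?thesis
  proof (intro exI conjI allI impI)
    show "d > 0" using d by simp
    fix z' assume "dist z' (cmap (fst g) (cinv (fst e) p)) < d"
    then have "z' \<in> cmap (fst g) ` V'" using d by (auto simp: dist_commute)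
    then obtain m' where m': "m' \<in> V'" "z' = cmap (fst g) m'" by blast
    then show "(g, z') \<in> Sat e B" using int_step[OF e g] Vsub by (auto simp: V'_def V_def)
  qed
qed

lemma sat_local_bd:
  assumes e: "e \<in> SS" and g: "g \<in> SS" and B: "open B"
    and p: "p \<in> B" "p \<in> D e" and z: "z \<in> D g" and bq: "bequiv (fst e) {p} (fst g) {z}"
  shows "\<exists>d>0. \<forall>z' \<in> cran (fst g) \<union> D g. dist z' z < d \<longrightarrow> (g, z') \<in> Sat e B"
proof -
  have ce: "is_chart X (fst e)" using S_props(1)[OF e] .
  have cg: "is_chart X (fst g)" using S_props(1)[OF g] .
  have "open (B \<inter> snd e)" using B S_props(2)[OF e] by blast
  moreover have "p \<in> B \<inter> snd e" using p D_sub[OF e] by blast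
  ultimately obtain \<epsilon> where \<epsilon>: "\<epsilon> > 0" "cball p \<epsilon> \<subseteq> B \<inter> snd e"
    using open_contains_cball by blast
  have cov: "covers (fst e) {p} (fst g) {z}" using bq by (simp add: bequiv_def)
  have step1: "\<exists>d>0. \<forall>w \<in> cran (fst g). dist w z < d \<longrightarrow>
      cinv (fst g) w \<in> cdom (fst e) \<and> cmap (fst e) (cinv (fst g) w) \<in> ball p \<epsilon>"
  proof (rule ccontr)
    assume "\<not> ?thesis"
    then have "\<forall>k::nat. \<exists>w \<in> cran (fst g). dist w z < 1 / (real k + 1) \<and>
      \<not> (cinv (fst g) w \<in> cdom (fst e) \<and> cmap (fst e) (cinv (fst g) w) \<in> ball p \<epsilon>)"
      by (metis add_pos_pos divide_pos_pos of_nat_0_le_iff zero_less_one le_less_trans less_add_one)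
    then obtain w where w: "\<And>k. w k \<in> cran (fst g)" "\<And>k. dist (w k) z < 1 / (real k + 1)"
      "\<And>k. \<not> (cinv (fst g) (w k) \<in> cdom (fst e) \<and> cmap (fst e) (cinv (fst g) (w k)) \<in> ball p \<epsilon>)"
      by metis
    define s where "s k = cinv (fst g) (w k)" for k
    have s1: "\<And>k. s k \<in> cdom (fst g)" and s2: "cmap (fst g) \<circ> s = w"
      using chart_basic(6)[OF cg] w(1) by (auto simp: s_def)
    have "w \<longlonglongrightarrow> z" using ball_seq_lim w(2) by blast
    then have "(\<forall>i. s i \<in> cdom (fst g)) \<and> (\<exists>q\<in>{z}. seq_acc euclidean (cmap (fst g) \<circ> s) q)"
      using s1 s2 tendsto_acc by auto
    then obtain r where r: "\<forall>i. s (r i) \<in> cdom (fst e)" "seq_acc euclidean (cmap (fst e) \<circ> (s \<circ> r)) p"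
      using cov unfolding covers_def by blast
    obtain i where "(cmap (fst e) \<circ> (s \<circ> r)) i \<in> ball p \<epsilon>"
    proof -
      have "p \<in> ball p \<epsilon>" using \<epsilon>(1) by simp
      from acc_ev_exists[OF r(2) open_ball this eventually_True] show ?thesis using that by blast
    qed
    then show False using w(3)[of "r i"] r(1) by (auto simp: s_def)
  qed
  then obtain d where d: "d > 0" "\<And>w. w \<in> cran (fst g) \<Longrightarrow> dist w z < d \<Longrightarrow>
      cinv (fst g) w \<in> cdom (fst e) \<and> cmap (fst e) (cinv (fst g) w) \<in> ball p \<epsilon>"
    by blast
  show ?thesis
  proof (intro exI conjI ballI impI)
    show "d > 0" by (rule d(1))
    fix z' assume z': "z' \<in> cran (fst g) \<union> D g" and dz: "dist z' z < d"
    show "(g, z') \<in> Sat e B"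
    proof (cases "z' \<in> cran (fst g)")
      case True
      have m: "cinv (fst g) z' \<in> cdom (fst g)" "cmap (fst g) (cinv (fst g) z') = z'"
        using chart_basic(6)[OF cg True] by auto
      have "cinv (fst g) z' \<in> cdom (fst e)" "cmap (fst e) (cinv (fst g) z') \<in> B"
        using d(2)[OF True dz] \<epsilon>(2) by auto
      then show ?thesis using int_step[OF e g _ m(1)] m(2) by metis
    next
      case False
      then have zD: "z' \<in> D g" using z' by blast
      obtain x where x: "\<And>i. x i \<in> cdom (fst g)" "(cmap (fst g) \<circ> x) \<longlonglongrightarrow> z'"
        using seq_to_D[OF g zD] by blast
      have "eventually (\<lambda>j. (cmap (fst g) \<circ> x) j \<in> ball z d) sequentially"
        using topological_tendstoD[OF x(2) open_ball] dz by (simp add: dist_commute)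
      then obtain N where N: "\<And>j. j \<ge> N \<Longrightarrow> dist (cmap (fst g) (x j)) z < d"
        by (auto simp: eventually_sequentially dist_commute)
      define y where "y j = x (j + N)" for j
      have xinv: "\<And>j. cinv (fst g) (cmap (fst g) (x j)) = x j" "\<And>j. cmap (fst g) (x j) \<in> cran (fst g)"
        using chart_basic(7)[OF cg] x(1) by auto
      have y1: "\<And>j. y j \<in> cdom (fst g) \<and> y j \<in> cdom (fst e) \<and> cmap (fst e) (y j) \<in> ball p \<epsilon>"
      proof -
        fix j
        have "dist (cmap (fst g) (x (j + N))) z < d" using N by simp
        then show "y j \<in> cdom (fst g) \<and> y j \<in> cdom (fst e) \<and> cmap (fst e) (y j) \<in> ball p \<epsilon>"
          using d(2)[OF xinv(2)] xinv(1) x(1) by (simp add: y_def)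
      qed
      have y2: "(cmap (fst g) \<circ> y) \<longlonglongrightarrow> z'"
        using LIMSEQ_ignore_initial_segment[OF x(2), of N] by (simp add: y_def o_def)
      have "\<forall>j. (cmap (fst e) \<circ> y) j \<in> cball p \<epsilon>" using y1 by (auto intro: less_imp_le)
      then obtain p'' r where pr: "p'' \<in> cball p \<epsilon>" "strict_mono r" "((cmap (fst e) \<circ> y) \<circ> r) \<longlonglongrightarrow> p''"
        using seq_compactE[OF compact_imp_seq_compact[OF compact_cball]] by metis
      define t where "t = y \<circ> r"
      have t1: "\<And>i. t i \<in> cdom (fst e) \<and> t i \<in> cdom (fst g)" using y1 by (simp add: t_def)
      have t2: "(cmap (fst e) \<circ> t) \<longlonglongrightarrow> p''" using pr(3) by (simp add: t_def o_assoc)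
      have t3: "(cmap (fst g) \<circ> t) \<longlonglongrightarrow> z'"
        using LIMSEQ_subseq_LIMSEQ[OF y2 pr(2)] by (simp add: t_def o_assoc)
      have "p'' \<in> closure (cran (fst e))"
        unfolding closure_sequential
        using t1 t2 chart_basic(7)[OF ce] by (intro exI[of _ "cmap (fst e) \<circ> t"]) auto
      then have pN: "p'' \<in> cran (fst e) \<union> D e" using S_props(4)[OF e] pr(1) \<epsilon>(2) by auto
      have pT: "(e, p'') \<in> topspace TT" using topT e pN by auto
      have zT: "(g, z') \<in> topspace TT" using topT g z' by auto
      have "ident (e, p'') (g, z')" using contact_ident[OF pT zT t1 t2 t3] .
      then show ?thesis using pN zT pr(1) \<epsilon>(2) by (auto simp: Sat_def)
    qed
  qed
qed

lemma sat_open: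
  assumes e: "e \<in> SS" and B: "open B"
  shows "openin TT (Sat e B)"
  unfolding N_Q_def openin_sum_topology
proof (intro conjI ballI)
  show "Sat e B \<subseteq> Sigma SS (topspace \<circ> N_ext)"
    using topspace_sum_topology[of N_ext SS] by (auto simp: Sat_def N_Q_def)
  fix g assume g: "g \<in> SS"
  show "openin (N_ext g) {x. (g, x) \<in> Sat e B}"
    unfolding N_ext_def openin_euclidean_subtopology_iff
  proof (intro conjI ballI)
    show "{x. (g, x) \<in> Sat e B} \<subseteq> cran (fst g) \<union> D g"
      using topT by (auto simp: Sat_def)
    fix z assume "z \<in> {x. (g, x) \<in> Sat e B}"
    then obtain p where p: "p \<in> B" "p \<in> cran (fst e) \<union> D e" "ident (e, p) (g, z)"
      by (auto simp: Sat_def)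
    show "\<exists>d>0. \<forall>x'\<in>cran (fst g) \<union> D g. dist x' z < d \<longrightarrow> x' \<in> {x. (g, x) \<in> Sat e B}"
    proof (cases "p \<in> cran (fst e) \<and> z \<in> cran (fst g) \<and> cinv (fst e) p \<in> cdom (fst g) \<and> cmap (fst g) (cinv (fst e) p) = z")
      case True
      then show ?thesis using sat_local_int[OF e g B p(1)] by auto
    next
      case False
      then have "p \<in> D e" "z \<in> D g" "bequiv (fst e) {p} (fst g) {z}" using p(3) by (auto simp: ident_iff)
      then show ?thesis using sat_local_bd[OF e g B p(1)] by auto
    qed
  qed
qed

lemma completion_Hausdorff: "Hausdorff_space (completion X A Q)"
  unfolding completion_def
proof (rule quotient_Hausdorff)
  show "\<And>u. u \<in> topspace TT \<Longrightarrow> ident u u" by (rule ident_refl)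
  show "\<And>u v. u \<in> topspace TT \<Longrightarrow> v \<in> topspace TT \<Longrightarrow> ident u v \<Longrightarrow> ident v u" by (rule ident_sym)
  show "\<And>u v w. u \<in> topspace TT \<Longrightarrow> v \<in> topspace TT \<Longrightarrow> w \<in> topspace TT \<Longrightarrow> ident u v \<Longrightarrow> ident v w \<Longrightarrow> ident u w"
    by (rule ident_trans)
  fix u v assume u: "u \<in> topspace TT" and v: "v \<in> topspace TT" and ni: "\<not> ident u v"
  obtain e x where ux: "u = (e, x)" by (cases u)
  obtain f y where vy: "v = (f, y)" by (cases v)
  have e: "e \<in> SS" and f: "f \<in> SS" using u v ux vy topT by auto
  obtain k :: nat where k: "Sat e (ball x (1 / (real k + 1))) \<inter> Sat f (ball y (1 / (real k + 1))) = {}"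
    using sep_balls u v ni ux vy by blast
  define G where "G = Sat e (ball x (1 / (real k + 1)))"
  define H where "H = Sat f (ball y (1 / (real k + 1)))"
  have "openin TT G" "openin TT H" using sat_open e f by (auto simp: G_def H_def)
  moreover have "u \<in> G" "v \<in> H" using sat_mem u v ux vy by (auto simp: G_def H_def)
  moreover have "\<forall>a\<in>G. \<forall>b\<in>topspace TT. ident a b \<longrightarrow> b \<in> G"
    using sat_closed[OF e] by (auto simp: G_def)
  moreover have "\<forall>a\<in>H. \<forall>b\<in>topspace TT. ident a b \<longrightarrow> b \<in> H"
    using sat_closed[OF f] by (auto simp: H_def)
  moreover have "G \<inter> H = {}" using k by (simp add: G_def H_def)
  ultimately show "\<exists>G H. openin TT G \<and> openin TT H \<and> u \<in> G \<and> v \<in> H \<and>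
       (\<forall>a\<in>G. \<forall>b\<in>topspace TT. ident a b \<longrightarrow> b \<in> G) \<and> (\<forall>a\<in>H. \<forall>b\<in>topspace TT. ident a b \<longrightarrow> b \<in> H) \<and> G \<inter> H = {}"
    by blast
qed

end

theorem mainTheorem8:
  fixes X :: "'m topology" and A :: "('m, 'a::euclidean_space) chart set"
    and Q :: "(('m, 'a) chart \<times> 'a set) set"
  assumes "smooth_manifold X A"
    and "Q \<subseteq> extensions X A"
    and "pairwise (compatible_ext X) Q"
  shows "Hausdorff_space (completion X A Q)"
proof -
  interpret compl_setting X A Q using assms by unfold_locales
  show ?thesis by (rule completion_Hausdorff)
qed

end
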